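(* Let $\Lambda = A\mathds Z^d$, with $A\in \mathds R^{d\times d}$ regular, $d\in\{1,2,3\}$. Then the Axilrod-Teller-Muto cohesive energy can be rewritten in terms of three-body zeta functions as \[ E^{(3)}_\mathrm{coh} = \frac{1}{24}\zeta_\Lambda^{(3)}(3,3,3) - \frac{3}{16} \zeta_\Lambda^{(3)}(-1,5,5)+\frac{3}{8} \zeta_\Lambda^{(3)}(1,3,5). \]
   Context: For a trimer with relative vectors $\bm x,\bm y\in\mathds R^d$ and $\bm z=\bm y-\bm x$, the ATM potential is \[ U^{(3)}_{\mathrm{ATM}}(\bm x,\bm y) = \vert \bm x \vert^{-3}\vert \bm y \vert^{-3}\vert \bm z\vert^{-3} - 3 \frac{(\bm x\cdot \bm y)(\bm y\cdot \bm z)(\bm z\cdot \bm x)}{\vert \bm x \vert^{5}\vert \bm y \vert^{5}\vert \bm z\vert^{5}}, \] and the cohesive energy per particle is $E_{\mathrm{coh}}^{(3)} = \frac{1}{6}{\sum_{\bm x,\bm y \in \Lambda}}' U^{(3)}_{\mathrm{ATM}}(\bm x,\bm y)$, where the primed sum excludes $\bm x=\bm 0$, $\bm y=\bm 0$, and $\bm x=\bm y$. The three-body zeta function is $\zeta_\Lambda^{(3)}(\nu_1,\nu_2,\nu_3)={\sum_{\bm x^{(1)},\bm x^{(2)}\in\Lambda}}' |\bm x^{(1)}|^{-\nu_1}|\bm x^{(2)}-\bm x^{(1)}|^{-\nu_2}|\bm x^{(2)}|^{-\nu_3}$ (primed sum excluding vanishing distances), defined for $\mathrm{Re}(\nu_i)>d$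 and meromorphically continued to $\nu_i\in\mathds C$ (via the representation $V_\Lambda\int_{\mathrm{BZ}}\prod_i Z_{\Lambda,\nu_i}(\bm k)\,\mathrm d\bm k$ with Hadamard regularization, $Z_{\Lambda,\nu}$ the Epstein zeta function); the values at $(-1,5,5)$ and $(1,3,5)$ are understood in this sense. *)

theory Defs
  imports "HOL-Analysis.Analysis"
begin

text \<open>The lattice \<Lambda> = A Z^d, with the dimension d = CARD('n).\<close>
definition lattice :: "real^'n^'n \<Rightarrow> (real^'n) set" where
  "lattice A = range (\<lambda>k::int^'n. A *v (\<chi> i. of_int (k $ i)))"

text \<open>Index set of the primed double sum: x, y in \<Lambda>, x \<noteq> 0, y \<noteq> 0, x \<noteq> y.\<close>
definition pairs3 :: "real^'n^'n \<Rightarrow> ((real^'n) \<times> (real^'n)) set" where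
  "pairs3 A = {(x, y). x \<in> lattice A \<and> y \<in> lattice A \<and> x \<noteq> 0 \<and> y \<noteq> 0 \<and> x \<noteq> y}"

text \<open>Three-body zeta function as the (unconditional) lattice sum.\<close>
definition zeta3 :: "real^'n^'n \<Rightarrow> real \<Rightarrow> real \<Rightarrow> real \<Rightarrow> real" where
  "zeta3 A \<nu>1 \<nu>2 \<nu>3 =
     (\<Sum>\<^sub>\<infinity>(x, y)\<in>pairs3 A.
        norm x powr (-\<nu>1) * norm (y - x) powr (-\<nu>2) * norm y powr (-\<nu>3))"

text \<open>Axilrod-Teller-Muto three-body potential.\<close>
definition U_ATM :: "real^'n \<Rightarrow> real^'n \<Rightarrow> real" where
  "U_ATM x y = (let z = y - x in
     norm x powr (-3) * norm y powr (-3) * norm z powr (-3)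
     - 3 * ((x \<bullet> y) * (y \<bullet> z) * (z \<bullet> x)) /
           (norm x ^ 5 * norm y ^ 5 * norm z ^ 5))"

definition E_coh3 :: "real^'n^'n \<Rightarrow> real" where
  "E_coh3 A = 1/6 * (\<Sum>\<^sub>\<infinity>(x, y)\<in>pairs3 A. U_ATM x y)"

end

theory Submission imports Defs begin

definition phi :: "int \<Rightarrow> real" where
  "phi m = (1 + \<bar>real_of_int m\<bar>) powr (-(4/3))"

lemma phi_nonneg: "phi m \<ge> 0" by (simp add: phi_def)

lemma sum1d: "phi summable_on UNIV"
proof -
  have s: "summable (\<lambda>n. real n powr (-(4/3)))" by (subst summable_real_powr_iff) auto
  hence s': "summable (\<lambda>n. real (Suc n) powr (-(4/3)))" by (subst summable_Suc_iff)
  hence s2: "(\<lambda>n. real (Suc n) powr (-(4/3))) summable_on UNIV"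
    by (subst summable_on_UNIV_nonneg_real_iff) auto
  have e1: "phi \<circ> int = (\<lambda>n. real (Suc n) powr (-(4/3)))"
    by (auto simp: phi_def add.commute)
  have e2: "phi \<circ> (\<lambda>n. - int n) = (\<lambda>n. real (Suc n) powr (-(4/3)))"
    by (auto simp: phi_def add.commute)
  have 1: "phi summable_on range int"
    by (subst summable_on_reindex) (use s2 in \<open>auto simp: inj_on_def e1\<close>)
  have 2: "phi summable_on range (\<lambda>n. - int n)"
    by (subst summable_on_reindex) (use s2 in \<open>auto simp: inj_on_def e2\<close>)
  have U: "UNIV = range int \<union> range (\<lambda>n. - int n)"
  proof -
    { fix x :: int have "x \<in> range int \<union> range (\<lambda>n. - int n)"
      proof (cases "x \<ge> 0")
        case True then show ?thesis by (intro UnI1 image_eqI[of _ _ "nat x"]) auto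
      next
        case False then show ?thesis by (intro UnI2 image_eqI[of _ _ "nat (-x)"]) auto
      qed }
    then show ?thesis by auto
  qed
  show ?thesis using summable_on_union[OF 1 2] U by simp
qed

lemma sumprod: "(\<lambda>k::int^'n. \<Prod>i\<in>UNIV. phi (k$i)) summable_on UNIV"
proof -
  have a: "Infinite_Set_Sum.abs_summable_on phi UNIV"
    using sum1d phi_nonneg by (simp add: abs_summable_equivalent[symmetric])
  have "Infinite_Set_Sum.abs_summable_on (\<lambda>g. \<Prod>i\<in>UNIV. phi (g i)) (PiE (UNIV::'n set) (\<lambda>_. UNIV))"
    by (rule abs_summable_on_prod_PiE) (use a in auto)
  then have "(\<lambda>g. \<Prod>i\<in>UNIV. phi (g i)) summable_on (UNIV :: ('n \<Rightarrow> int) set)"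
    using phi_nonneg by (simp add: abs_summable_equivalent[symmetric] PiE_UNIV prod_nonneg)
  moreover have "bij_betw vec_nth (UNIV :: (int^'n) set) UNIV"
    by (auto simp: bij_betw_def inj_on_def vec_eq_iff) (metis vec_lambda_inverse UNIV_I rangeI)
  ultimately show ?thesis
    using summable_on_reindex_bij_betw[of vec_nth UNIV UNIV "\<lambda>g. \<Prod>i\<in>UNIV. phi (g i)"] by blast
qed

definition iv :: "int^'n \<Rightarrow> real^'n" where "iv k = (\<chi> i. real_of_int (k$i))"

lemma iv_inj: "iv a = iv b \<Longrightarrow> a = b"
  by (simp add: iv_def vec_eq_iff)

lemma lattice_iv: "lattice A = range (\<lambda>k. A *v iv k)"
  by (simp add: lattice_def iv_def)

lemma iv_diff: "iv (k1 - k2) = iv k1 - iv k2"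
  by (simp add: iv_def vec_eq_iff)

lemma lattice_diff: "x \<in> lattice A \<Longrightarrow> y \<in> lattice A \<Longrightarrow> x - y \<in> lattice A"
  unfolding lattice_iv
  by (auto simp: matrix_vector_mult_diff_distrib[symmetric] iv_diff[symmetric])

lemma lattice_zero: "0 \<in> lattice A"
proof -
  have "iv 0 = 0" by (simp add: iv_def vec_eq_iff)
  then show ?thesis unfolding lattice_iv by (metis matrix_vector_mult_0_right rangeI)
qed

lemma lattice_neg: "x \<in> lattice A \<Longrightarrow> - x \<in> lattice A"
  using lattice_diff[OF lattice_zero, of x A] by simp

lemma sum_lat:
  fixes A :: "real^'n^'n"
  assumes inv: "invertible A" and d: "CARD('n) \<le> 3" and s: "s \<ge> 4"
  shows "(\<lambda>v. norm v powr (-s)) summable_on (lattice A - {0})"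
proof -
  define h where "h k = A *v iv k" for k
  obtain B where B: "B ** A = mat 1" using inv unfolding invertible_def by blast
  obtain K where K: "K > 0" "\<And>x. norm (B *v x) \<le> norm x * K"
    using bounded_linear.pos_bounded[OF matrix_vector_mul_bounded_linear[of B]] by blast
  have bck: "iv k = B *v h k" for k
    by (simp add: h_def matrix_vector_mul_assoc B)
  have inj: "inj h"
    by (rule injI) (metis bck iv_inj)
  have h0: "h 0 = 0"
  proof -
    have "iv (0::int^'n) = 0" by (simp add: iv_def vec_eq_iff)
    then show ?thesis by (simp add: h_def)
  qed
  have img: "lattice A - {0} = h ` (UNIV - {0})"
    unfolding lattice_iv h_def[symmetric] using inj h0
    by (auto simp: inj_eq) (metis h0 inj_eq inj)
  define C where "C = (2*K) powr s"
  have main: "norm (h k) powr (-s) \<le> C * (\<Prod>i\<in>UNIV. phi (k$i))" if k: "k \<noteq> 0" for k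
  proof -
    obtain j where j: "k$j \<noteq> 0" using k by (metis vec_eq_iff zero_index)
    have n1: "norm (iv k) \<le> norm (h k) * K" using K(2)[of "h k"] bck by simp
    have "1 \<le> \<bar>real_of_int (k$j)\<bar>" using j by linarith
    also have "\<dots> \<le> norm (iv k)" using component_le_norm_cart[of "iv k" j] by (simp add: iv_def)
    finally have ge1: "1 \<le> norm (iv k)" .
    define W where "W = 2 * K * norm (h k)"
    have W2: "W \<ge> 2" using ge1 n1 by (simp add: W_def algebra_simps)
    have hk: "norm (h k) > 0" using W2 K unfolding W_def
      by (metis mult_eq_0_iff norm_ge_zero not_less_iff_gr_or_eq order_le_less zero_less_numeral not_le rel_simps(76) W_def dual_order.trans)
    have ci: "1 + \<bar>real_of_int (k$i)\<bar> \<le> W" for i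
    proof -
      have "\<bar>real_of_int (k$i)\<bar> \<le> norm (iv k)" using component_le_norm_cart[of "iv k" i] by (simp add: iv_def)
      then show ?thesis using ge1 n1 by (simp add: W_def algebra_simps)
    qed
    have "(\<Prod>i\<in>(UNIV::'n set). W powr (-(4/3))) \<le> (\<Prod>i\<in>UNIV. phi (k$i))"
      by (rule prod_mono) (auto simp: phi_def intro!: powr_mono2' ci)
    moreover have "(\<Prod>i\<in>(UNIV::'n set). W powr (-(4/3))) = W powr (real CARD('n) * (-(4/3)))"
      using W2 by (simp add: powr_power)
    moreover have "W powr (-s) \<le> W powr (real CARD('n) * (-(4/3)))"
      using W2 d s by (intro powr_mono) auto
    ultimately have le: "W powr (-s) \<le> (\<Prod>i\<in>UNIV. phi (k$i))" by linarith
    have "norm (h k) powr (-s) = C * W powr (-s)"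
      using K hk by (simp add: C_def W_def powr_mult powr_minus field_simps)
    also have "\<dots> \<le> C * (\<Prod>i\<in>UNIV. phi (k$i))"
      using le by (intro mult_left_mono) (auto simp: C_def)
    finally show ?thesis .
  qed
  have "(\<lambda>k. C * (\<Prod>i\<in>UNIV. phi (k$i))) summable_on (UNIV - {0})"
    by (intro summable_on_subset[OF summable_on_cmult_right[OF sumprod]]) auto
  then have "(\<lambda>k. norm (h k) powr (-s)) summable_on (UNIV - {0})"
    by (rule summable_on_comparison_test) (use main in auto)
  then show ?thesis
    unfolding img by (subst summable_on_reindex) (auto simp: o_def intro: inj_on_subset[OF inj])
qed


definition Dp :: "real \<Rightarrow> real \<Rightarrow> real \<Rightarrow> real" where
  "Dp a b c = 1/(a^4*b^5) + 1/(a^5*b^4) + 1/(a^4*c^5) + 1/(a^5*c^4) + 1/(c^4*b^5) + 1/(c^5*b^4)"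

lemma ord3: fixes p q r :: real assumes "0 < p" "p \<le> q" "q \<le> r" shows "1/(p^3*q^3*r^3) \<le> 1/(p^4*q^5)"
proof -
  have "q^2 \<le> r^2" using assms power_mono[of q r 2] by auto
  then have "p * q^2 \<le> r * r^2" using assms by (intro mult_mono) auto
  have "p^4*q^5 = (p^3*q^3) * (p*q^2)" by algebra
  also have "\<dots> \<le> (p^3*q^3) * (r*r^2)"
    using \<open>p * q^2 \<le> r * r^2\<close> assms by (intro mult_left_mono) auto
  also have "\<dots> = p^3*q^3*r^3" by algebra
  finally have "p^4*q^5 \<le> p^3*q^3*r^3" .
  then show ?thesis using assms by (intro divide_left_mono) auto
qed

lemma Dp_ge:
  assumes "a > 0" "b > 0" "c > 0"
  shows "1/(a^4*b^5) \<le> Dp a b c" "1/(a^5*b^4) \<le> Dp a b c" "1/(a^4*c^5) \<le> Dp a b c"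
        "1/(a^5*c^4) \<le> Dp a b c" "1/(c^4*b^5) \<le> Dp a b c" "1/(c^5*b^4) \<le> Dp a b c"
proof -
  have n: "0 \<le> 1/(a^4*b^5)" "0 \<le> 1/(a^5*b^4)" "0 \<le> 1/(a^4*c^5)"
        "0 \<le> 1/(a^5*c^4)" "0 \<le> 1/(c^4*b^5)" "0 \<le> 1/(c^5*b^4)" using assms by auto
  show "1/(a^4*b^5) \<le> Dp a b c" "1/(a^5*b^4) \<le> Dp a b c" "1/(a^4*c^5) \<le> Dp a b c"
        "1/(a^5*c^4) \<le> Dp a b c" "1/(c^4*b^5) \<le> Dp a b c" "1/(c^5*b^4) \<le> Dp a b c"
    using n unfolding Dp_def by linarith+
qed

lemma ineq1: assumes "a > 0" "b > 0" "c > 0" shows "1/(a^3*c^3*b^3) \<le> Dp a b c"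
proof -
  note D = Dp_ge[OF assms]
  consider "a \<le> b" "b \<le> c" | "a \<le> c" "c \<le> b" | "b \<le> a" "a \<le> c" | "b \<le> c" "c \<le> a"
    | "c \<le> a" "a \<le> b" | "c \<le> b" "b \<le> a" by linarith
  then show ?thesis
  proof cases
    case 1 then show ?thesis using ord3[of a b c] D assms by (simp add: ac_simps)
  next
    case 2 then show ?thesis using ord3[of a c b] D assms by (simp add: ac_simps)
  next
    case 3 then show ?thesis using ord3[of b a c] D assms by (simp add: ac_simps)
  next
    case 4 then show ?thesis using ord3[of b c a] D assms by (simp add: ac_simps)
  next
    case 5 then show ?thesis using ord3[of c a b] D assms by (simp add: ac_simps)
  next
    case 6 then show ?thesis using ord3[of c b a] D assms by (simp add: ac_simps)
  qed
qed

lemma ineq2: assumes "a > 0" "b > 0" "c > 0" "a \<le> b + c" shows "a/(c^5*b^5) \<le> Dp a b c"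
proof -
  have "a/(c^5*b^5) \<le> (b+c)/(c^5*b^5)" using assms by (intro divide_right_mono) auto
  also have "\<dots> = 1/(c^5*b^4) + 1/(c^4*b^5)" using assms by (simp add: field_simps; algebra)
  also have "\<dots> \<le> Dp a b c" using assms unfolding Dp_def by (auto simp: ac_simps)
  finally show ?thesis .
qed

lemma ineq3: assumes "a > 0" "b > 0" "c > 0" shows "1/(a*c^3*b^5) \<le> Dp a b c"
proof (cases "a \<le> c")
  case True
  have "a^4*b^5 \<le> a*c^3*b^5" using True assms
    by (intro mult_right_mono) (auto simp: power_def intro!: mult_left_mono mult_mono)
  then have "1/(a*c^3*b^5) \<le> 1/(a^4*b^5)" using assms by (intro divide_left_mono) auto
  then show ?thesis using Dp_ge[OF assms] by linarith
next
  case False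
  have "c^4*b^5 \<le> a*c^3*b^5" using False assms
    by (intro mult_right_mono) (auto simp: power_def intro!: mult_left_mono mult_mono)
  then have "1/(a*c^3*b^5) \<le> 1/(c^4*b^5)" using assms by (intro divide_left_mono) auto
  then show ?thesis using Dp_ge[OF assms] by linarith
qed

definition Nn :: "real \<Rightarrow> real^'n \<Rightarrow> real" where "Nn s v = norm v powr (-s)"

definition Fz :: "real \<Rightarrow> real \<Rightarrow> real \<Rightarrow> ((real^'n) \<times> (real^'n)) \<Rightarrow> real" where
  "Fz e1 e2 e3 = (\<lambda>(x, y). norm x powr (-e1) * norm (y - x) powr (-e2) * norm y powr (-e3))"

lemma zeta3_Fz: "zeta3 A e1 e2 e3 = infsum (Fz e1 e2 e3) (pairs3 A)"
  by (simp add: zeta3_def Fz_def)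

lemma sum_pair:
  fixes f g :: "'a \<Rightarrow> real"
  assumes "f summable_on S" "g summable_on S" "\<And>x. x \<in> S \<Longrightarrow> f x \<ge> 0" "\<And>x. x \<in> S \<Longrightarrow> g x \<ge> 0"
  shows "(\<lambda>(p, q). f p * g q) summable_on S \<times> S"
proof -
  have "(\<lambda>pq. (\<lambda>(p, q). f p * g q) pq) summable_on Sigma S (\<lambda>_. S)"
  proof (rule summable_on_SigmaI[where g = "\<lambda>p. f p * infsum g S"])
    show "\<And>x. x \<in> S \<Longrightarrow> ((\<lambda>y. (\<lambda>(p, q). f p * g q) (x, y)) has_sum f x * infsum g S) S"
      using assms(2) by (auto intro!: has_sum_cmult_right)
    show "(\<lambda>p. f p * infsum g S) summable_on S"
      using assms(1) by (rule summable_on_cmult_left)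
    show "\<And>x y. x \<in> S \<Longrightarrow> y \<in> S \<Longrightarrow> 0 \<le> (\<lambda>(p, q). f p * g q) (x, y)"
      using assms by auto
  qed
  then show ?thesis by simp
qed

lemma pairs3_mem: "(x, y) \<in> pairs3 A \<longleftrightarrow> x \<in> lattice A \<and> y \<in> lattice A \<and> x \<noteq> 0 \<and> y \<noteq> 0 \<and> x \<noteq> y"
  by (simp add: pairs3_def)

lemma sum_NN:
  fixes A :: "real^'n^'n"
  assumes inv: "invertible A" and d: "CARD('n) \<le> 3" and s: "s \<ge> 4" and t: "t \<ge> 4"
  shows "(\<lambda>(p, q). Nn s p * Nn t q) summable_on (lattice A - {0}) \<times> (lattice A - {0})"
  using sum_lat[OF inv d s] sum_lat[OF inv d t]
  by (intro sum_pair) (auto simp: Nn_def)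

lemma maps_sum:
  fixes A :: "real^'n^'n"
  assumes inv: "invertible A" and d: "CARD('n) \<le> 3" and s: "s \<ge> 4" and t: "t \<ge> 4"
  shows "(\<lambda>(x, y). Nn s x * Nn t y) summable_on pairs3 A"
    "(\<lambda>(x, y). Nn s x * Nn t (y - x)) summable_on pairs3 A"
    "(\<lambda>(x, y). Nn s (y - x) * Nn t y) summable_on pairs3 A"
proof -
  let ?S = "(lattice A - {0}) \<times> (lattice A - {0})"
  let ?G = "\<lambda>(p, q). Nn s p * Nn t q"
  have G: "?G summable_on ?S" by (rule sum_NN[OF assms])
  have gen: "(?G \<circ> m) summable_on pairs3 A" if "inj_on m (pairs3 A)" "m ` pairs3 A \<subseteq> ?S" for m
    using summable_on_subset[OF G that(2)] summable_on_reindex[OF that(1), of ?G] by simp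
  have "(?G \<circ> (\<lambda>p. p)) summable_on pairs3 A"
    by (rule gen) (auto simp: pairs3_def)
  then show "(\<lambda>(x, y). Nn s x * Nn t y) summable_on pairs3 A" by (simp add: o_def split_def)
  have "(?G \<circ> (\<lambda>(x, y). (x, y - x))) summable_on pairs3 A"
    by (rule gen) (auto simp: pairs3_def inj_on_def lattice_diff)
  then show "(\<lambda>(x, y). Nn s x * Nn t (y - x)) summable_on pairs3 A"
    by (simp add: o_def split_def)
  have "(?G \<circ> (\<lambda>(x, y). (y - x, y))) summable_on pairs3 A"
    by (rule gen) (auto simp: pairs3_def inj_on_def lattice_diff)
  then show "(\<lambda>(x, y). Nn s (y - x) * Nn t y) summable_on pairs3 A"
    by (simp add: o_def split_def)
qed

definition Dfun :: "((real^'n) \<times> (real^'n)) \<Rightarrow> real" where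
  "Dfun = (\<lambda>(x, y). Dp (norm x) (norm y) (norm (y - x)))"

lemma Nn45: "v \<noteq> 0 \<Longrightarrow> Nn 4 v = 1 / norm v ^ 4" "v \<noteq> 0 \<Longrightarrow> Nn 5 v = 1 / norm v ^ 5"
  by (simp_all add: Nn_def powr_minus divide_inverse)

lemma Dfun_sum:
  fixes A :: "real^'n^'n"
  assumes inv: "invertible A" and d: "CARD('n) \<le> 3"
  shows "Dfun summable_on pairs3 A"
proof -
  note M45 = maps_sum[OF inv d, of 4 5, simplified] and M54 = maps_sum[OF inv d, of 5 4, simplified]
  have "(\<lambda>p. (\<lambda>(x, y). Nn 4 x * Nn 5 y) p + (\<lambda>(x, y). Nn 5 x * Nn 4 y) p
     + (\<lambda>(x, y). Nn 4 x * Nn 5 (y - x)) p + (\<lambda>(x, y). Nn 5 x * Nn 4 (y - x)) p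
     + (\<lambda>(x, y). Nn 4 (y - x) * Nn 5 y) p + (\<lambda>(x, y). Nn 5 (y - x) * Nn 4 y) p) summable_on pairs3 A"
    by (intro summable_on_add M45 M54)
  then show ?thesis
  proof (rule summable_on_cong[THEN iffD1, rotated])
    fix p assume "p \<in> pairs3 A"
    then obtain x y where p: "p = (x, y)" "x \<noteq> 0" "y \<noteq> 0" "y - x \<noteq> 0"
      by (cases p) (auto simp: pairs3_def)
    show "(\<lambda>(x, y). Nn 4 x * Nn 5 y) p + (\<lambda>(x, y). Nn 5 x * Nn 4 y) p
     + (\<lambda>(x, y). Nn 4 x * Nn 5 (y - x)) p + (\<lambda>(x, y). Nn 5 x * Nn 4 (y - x)) p
     + (\<lambda>(x, y). Nn 4 (y - x) * Nn 5 y) p + (\<lambda>(x, y). Nn 5 (y - x) * Nn 4 y) p = Dfun p"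
      using p by (simp add: Dfun_def Dp_def Nn45 ac_simps)
  qed
qed


lemma pw: "(a::real) > 0 \<Longrightarrow> a powr (- numeral n) = 1 / a ^ numeral n"
  by (simp add: powr_minus divide_inverse powr_numeral)

lemma pw1: "(a::real) > 0 \<Longrightarrow> a powr (- 1) = 1 / a"
  by (simp add: powr_minus divide_inverse)

lemma pwm1: "(a::real) > 0 \<Longrightarrow> a powr (- (- 1)) = a"
  by simp

lemma pairs3_pos: "(x, y) \<in> pairs3 A \<Longrightarrow> norm x > 0 \<and> norm y > 0 \<and> norm (y - x) > 0"
  by (auto simp: pairs3_def)

lemma Fz_vals:
  assumes "(x, y) \<in> pairs3 A"
  shows "Fz 3 3 3 (x, y) = 1/(norm x^3 * norm (y-x)^3 * norm y^3)"
        "Fz (-1) 5 5 (x, y) = norm x / (norm (y-x)^5 * norm y^5)"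
        "Fz 1 3 5 (x, y) = 1/(norm x * norm (y-x)^3 * norm y^5)"
  using pairs3_pos[OF assms] by (simp_all add: Fz_def pw pw1)

lemma Fz_nonneg: "Fz e1 e2 e3 p \<ge> 0"
  by (cases p) (simp add: Fz_def)

lemma base_sum:
  fixes A :: "real^'n^'n"
  assumes inv: "invertible A" and d: "CARD('n) \<le> 3"
  shows "Fz 3 3 3 summable_on pairs3 A" "Fz (-1) 5 5 summable_on pairs3 A" "Fz 1 3 5 summable_on pairs3 A"
proof -
  note D = Dfun_sum[OF inv d]
  have tri: "norm x \<le> norm y + norm (y - x)" for x y :: "real^'n"
    using norm_triangle_ineq4[of y "y - x"] by simp
  show "Fz 3 3 3 summable_on pairs3 A"
  proof (rule summable_on_comparison_test[OF D])
    fix p assume p: "p \<in> pairs3 A"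
    then obtain x y where xy: "p = (x, y)" by (cases p)
    show "Fz 3 3 3 p \<le> Dfun p" using p pairs3_pos[of x y A] ineq1[of "norm x" "norm y" "norm (y - x)"]
      by (simp add: xy Fz_vals Dfun_def)
  qed (rule Fz_nonneg)
  show "Fz (-1) 5 5 summable_on pairs3 A"
  proof (rule summable_on_comparison_test[OF D])
    fix p assume p: "p \<in> pairs3 A"
    then obtain x y where xy: "p = (x, y)" by (cases p)
    show "Fz (-1) 5 5 p \<le> Dfun p" using p pairs3_pos[of x y A] ineq2[of "norm x" "norm y" "norm (y - x)"] tri[of x y]
      by (simp add: xy Fz_vals Dfun_def)
  qed (rule Fz_nonneg)
  show "Fz 1 3 5 summable_on pairs3 A"
  proof (rule summable_on_comparison_test[OF D])
    fix p assume p: "p \<in> pairs3 A"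
    then obtain x y where xy: "p = (x, y)" by (cases p)
    show "Fz 1 3 5 p \<le> Dfun p" using p pairs3_pos[of x y A] ineq3[of "norm x" "norm y" "norm (y - x)"]
      by (simp add: xy Fz_vals Dfun_def)
  qed (rule Fz_nonneg)
qed

definition sw :: "(real^'n) \<times> (real^'n) \<Rightarrow> (real^'n) \<times> (real^'n)" where
  "sw = (\<lambda>(x, y). (y, x))"
definition tt :: "(real^'n) \<times> (real^'n) \<Rightarrow> (real^'n) \<times> (real^'n)" where
  "tt = (\<lambda>(x, y). (- x, y - x))"

lemma bij_sw: "bij_betw sw (pairs3 A) (pairs3 A)"
  by (rule bij_betw_byWitness[where f' = sw]) (auto simp: sw_def pairs3_def)

lemma bij_tt: "bij_betw tt (pairs3 A) (pairs3 A)"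
  by (rule bij_betw_byWitness[where f' = tt])
     (auto simp: tt_def pairs3_def lattice_diff lattice_neg)

lemma Fz_sw: "Fz e1 e2 e3 (sw p) = Fz e3 e2 e1 p"
  by (cases p) (simp add: Fz_def sw_def norm_minus_commute mult_ac)

lemma Fz_tt: "Fz e1 e2 e3 (tt p) = Fz e1 e3 e2 p"
  by (cases p) (simp add: Fz_def tt_def mult_ac)

lemma hs_sw: "(Fz e1 e2 e3 has_sum v) (pairs3 A) \<Longrightarrow> (Fz e3 e2 e1 has_sum v) (pairs3 A)"
  using has_sum_reindex_bij_betw[OF bij_sw[of A], where f="Fz e1 e2 e3" and S=v] by (simp add: Fz_sw)

lemma hs_tt: "(Fz e1 e2 e3 has_sum v) (pairs3 A) \<Longrightarrow> (Fz e1 e3 e2 has_sum v) (pairs3 A)"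
  using has_sum_reindex_bij_betw[OF bij_tt[of A], where f="Fz e1 e2 e3" and S=v] by (simp add: Fz_tt)

lemma real_ident:
  fixes a b c :: real
  assumes "a > 0" "b > 0" "c > 0"
  shows "1/a^3 * (1/b^3) * (1/c^3) - 3 * (((a^2+b^2-c^2)/2) * (b^2 - (a^2+b^2-c^2)/2) * ((a^2+b^2-c^2)/2 - a^2)) / (a^5*b^5*c^5)
   = 1/4 * (1/a^3 * (1/c^3) * (1/b^3))
     + (-3/8) * (a * (1/c^5) * (1/b^5) + 1/a^5 * (1/c^5) * b + 1/a^5 * c * (1/b^5))
     + 3/8 * (1/a * (1/c^5) * (1/b^3) + 1/a^3 * (1/c^5) * (1/b) + 1/a^5 * (1/c^3) * (1/b)
             + 1/a^5 * (1/c) * (1/b^3) + 1/a * (1/c^3) * (1/b^5) + 1/a^3 * (1/c) * (1/b^5))"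
  using assms by (simp add: field_simps; algebra)

lemma U_ident:
  assumes p: "(x, y) \<in> pairs3 A"
  shows "U_ATM x y = 1/4 * Fz 3 3 3 (x, y)
     + (-3/8) * (Fz (-1) 5 5 (x, y) + Fz 5 5 (-1) (x, y) + Fz 5 (-1) 5 (x, y))
     + 3/8 * (Fz 1 5 3 (x, y) + Fz 3 5 1 (x, y) + Fz 5 3 1 (x, y)
             + Fz 5 1 3 (x, y) + Fz 1 3 5 (x, y) + Fz 3 1 5 (x, y))"
proof -
  define a where "a = norm x"
  define b where "b = norm y"
  define c where "c = norm (y - x)"
  have pos: "a > 0" "b > 0" "c > 0" using pairs3_pos[OF p] by (auto simp: a_def b_def c_def)
  have cc: "c^2 = a^2 + b^2 - 2 * (x \<bullet> y)"
    by (simp add: a_def b_def c_def power2_norm_eq_inner inner_diff_left inner_diff_right inner_commute)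
  have ip3: "x \<bullet> y = (a^2+b^2-c^2)/2" using cc by simp
  have ip1: "y \<bullet> (y - x) = b^2 - x \<bullet> y"
    by (simp add: b_def power2_norm_eq_inner inner_diff_right inner_commute)
  have ip2: "(y - x) \<bullet> x = x \<bullet> y - a^2"
    by (simp add: a_def power2_norm_eq_inner inner_diff_left inner_diff_right inner_commute)
  have U: "U_ATM x y = 1/a^3 * (1/b^3) * (1/c^3) - 3 * (((a^2+b^2-c^2)/2) * (b^2 - (a^2+b^2-c^2)/2) * ((a^2+b^2-c^2)/2 - a^2)) / (a^5*b^5*c^5)"
    unfolding U_ATM_def Let_def ip1 ip2 ip3 using pos
    by (simp add: a_def[symmetric] b_def[symmetric] c_def[symmetric] pw)
  show ?thesis
    unfolding U real_ident[OF pos] using pos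
    by (simp add: Fz_def a_def[symmetric] b_def[symmetric] c_def[symmetric] pw pw1 mult_ac)
qed

theorem proposition1:
  fixes A :: "real^'n^'n"
  assumes "invertible A"
    and "CARD('n) \<in> {1, 2, 3}"
  shows "E_coh3 A = 1/24 * zeta3 A 3 3 3 - 3/16 * zeta3 A (-1) 5 5 + 3/8 * zeta3 A 1 3 5"
proof -
  have d: "CARD('n) \<le> 3" using assms(2) by auto
  note bs = base_sum[OF assms(1) d]
  define Z1 where "Z1 = zeta3 A 3 3 3"
  define Z2 where "Z2 = zeta3 A (-1) 5 5"
  define Z3 where "Z3 = zeta3 A 1 3 5"
  have h1: "(Fz 3 3 3 has_sum Z1) (pairs3 A)" using bs(1) by (simp add: Z1_def zeta3_Fz)
  have h2: "(Fz (-1) 5 5 has_sum Z2) (pairs3 A)" using bs(2) by (simp add: Z2_def zeta3_Fz)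
  have h3: "(Fz 1 3 5 has_sum Z3) (pairs3 A)" using bs(3) by (simp add: Z3_def zeta3_Fz)
  have h2a: "(Fz 5 5 (-1) has_sum Z2) (pairs3 A)" by (rule hs_sw[OF h2])
  have h2b: "(Fz 5 (-1) 5 has_sum Z2) (pairs3 A)" by (rule hs_tt[OF h2a])
  have h3a: "(Fz 1 5 3 has_sum Z3) (pairs3 A)" by (rule hs_tt[OF h3])
  have h3b: "(Fz 5 3 1 has_sum Z3) (pairs3 A)" by (rule hs_sw[OF h3])
  have h3c: "(Fz 3 5 1 has_sum Z3) (pairs3 A)" by (rule hs_sw[OF h3a])
  have h3d: "(Fz 5 1 3 has_sum Z3) (pairs3 A)" by (rule hs_tt[OF h3b])
  have h3e: "(Fz 3 1 5 has_sum Z3) (pairs3 A)" by (rule hs_sw[OF h3d])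
  have comb: "((\<lambda>p. 1/4 * Fz 3 3 3 p
     + (-3/8) * (Fz (-1) 5 5 p + Fz 5 5 (-1) p + Fz 5 (-1) 5 p)
     + 3/8 * (Fz 1 5 3 p + Fz 3 5 1 p + Fz 5 3 1 p
             + Fz 5 1 3 p + Fz 1 3 5 p + Fz 3 1 5 p)) has_sum
     (1/4 * Z1 + (-3/8) * (Z2 + Z2 + Z2) + 3/8 * (Z3 + Z3 + Z3 + Z3 + Z3 + Z3))) (pairs3 A)"
    by (intro has_sum_add has_sum_cmult_right h1 h2 h2a h2b h3 h3a h3b h3c h3d h3e)
  have "((\<lambda>(x, y). U_ATM x y) has_sum
     (1/4 * Z1 + (-3/8) * (Z2 + Z2 + Z2) + 3/8 * (Z3 + Z3 + Z3 + Z3 + Z3 + Z3))) (pairs3 A)"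
    using comb
  proof (rule has_sum_cong[THEN iffD1, rotated])
    fix p assume "p \<in> pairs3 A"
    then show "1/4 * Fz 3 3 3 p
     + (-3/8) * (Fz (-1) 5 5 p + Fz 5 5 (-1) p + Fz 5 (-1) 5 p)
     + 3/8 * (Fz 1 5 3 p + Fz 3 5 1 p + Fz 5 3 1 p
             + Fz 5 1 3 p + Fz 1 3 5 p + Fz 3 1 5 p) = (\<lambda>(x, y). U_ATM x y) p"
      by (cases p) (simp only: U_ident case_prod_conv)
  qed
  then have "(\<Sum>\<^sub>\<infinity>(x, y)\<in>pairs3 A. U_ATM x y) = 1/4 * Z1 + (-3/8) * (Z2 + Z2 + Z2) + 3/8 * (Z3 + Z3 + Z3 + Z3 + Z3 + Z3)"
    by (rule infsumI)
  then show ?thesis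
    unfolding E_coh3_def Z1_def[symmetric] Z2_def[symmetric] Z3_def[symmetric] by simp
qed

end
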